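(* In the setting described in the context, for each $t\in(0,T_{max})$ and any $r\in(0,R)$ we have \[ -\frac{\mu R^n}{n}\,r^{1-n}\le v_r(r,t)\le\frac{\mu}{n}\,r,\qquad |v_r(r,t)|\le\frac{\|u(\cdot,t)\|_{L^\infty((0,R))}}{n}\,r,\qquad |v_{rr}(r,t)|\le\|u(\cdot,t)\|_{L^\infty((0,R))}. \]
   Context: Let $n\ge1$, $R>0$, $\Omega=B_R(0)\subset\mathbb{R}^n$, $\chi>0$, and let $u_0\in C^3(\bar\Omega)$ be radially symmetric and positive in $\bar\Omega$ with $\partial u_0/\partial\nu=0$ on $\partial\Omega$; let $\mu:=\frac{1}{|\Omega|}\int_\Omega u_0$. Let $T_{max}\in(0,\infty]$ and $(u,v)$ denote the maximally extended classical solution of the problem $u_t=\nabla\cdot\big(\frac{u\nabla u}{\sqrt{u^2+|\nabla u|^2}}\big)-\chi\nabla\cdot\big(\frac{u\nabla v}{\sqrt{1+|\nabla v|^2}}\big)$, $0=\Delta v-\mu+u$ in $\Omega\times(0,T_{max})$, $\big(\frac{u\nabla u}{\sqrt{u^2+|\nabla u|^2}}-\chi\frac{u\nabla v}{\sqrt{1+|\nabla v|^2}}\big)\cdot\nu=0$ on $\partial\Omega$, $u(\cdot,0)=u_0$; that is, $u\in C^{2,1}(\bar\Omega\times[0,T_{max}))$ and $v\in C^{2,0}(\bar\Omega\times[0,T_{max}))$ are the uniquely determined positive radially symmetric functions solving this problem classically, and $T_{max}$ is the maximal time of existence of this classical solution. By radial symmetry we write $u(r,t)$, $v(r,t)$ with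 $r=|x|\in(0,R)$, and subscripts $r$ denote radial derivatives. *)

theory Defs
  imports "HOL-Analysis.Analysis"
begin

text \<open>Partial derivative of a scalar field on real^'n in coordinate direction i,
  taken within the set S (so that one-sided derivatives on the boundary of a closed
  ball are covered).\<close>
definition pd :: "(real^'n \<Rightarrow> real) \<Rightarrow> (real^'n) set \<Rightarrow> 'n \<Rightarrow> real^'n \<Rightarrow> real" where
  "pd f S i x = frechet_derivative f (at x within S) (axis i 1)"

definition sgrad :: "(real^'n \<Rightarrow> real) \<Rightarrow> (real^'n) set \<Rightarrow> real^'n \<Rightarrow> real^'n" where
  "sgrad f S x = (\<chi> i. pd f S i x)"

definition sdiv :: "(real^'n \<Rightarrow> real^'n) \<Rightarrow> (real^'n) set \<Rightarrow> real^'n \<Rightarrow> real" where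
  "sdiv F S x = (\<Sum>i\<in>UNIV. pd (\<lambda>y. F y $ i) S i x)"

definition slap :: "(real^'n \<Rightarrow> real) \<Rightarrow> (real^'n) set \<Rightarrow> real^'n \<Rightarrow> real" where
  "slap f S x = sdiv (sgrad f S) S x"

fun Ck :: "nat \<Rightarrow> (real^'n \<Rightarrow> real) \<Rightarrow> (real^'n) set \<Rightarrow> bool" where
  "Ck 0 f S = continuous_on S f"
| "Ck (Suc k) f S = (continuous_on S f \<and> (\<forall>x\<in>S. f differentiable (at x within S))
      \<and> (\<forall>i. Ck k (pd f S i) S))"

definition tder :: "(real^'n \<Rightarrow> real \<Rightarrow> real) \<Rightarrow> real set \<Rightarrow> real^'n \<Rightarrow> real \<Rightarrow> real" where
  "tder w I x t = frechet_derivative (\<lambda>s. w x s) (at t within I) 1"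

definition C20 :: "(real^'n \<Rightarrow> real \<Rightarrow> real) \<Rightarrow> (real^'n) set \<Rightarrow> real set \<Rightarrow> bool" where
  "C20 w S I \<longleftrightarrow>
     (\<forall>t\<in>I. Ck 2 (\<lambda>x. w x t) S)
   \<and> continuous_on (S \<times> I) (\<lambda>(x,t). w x t)
   \<and> (\<forall>i. continuous_on (S \<times> I) (\<lambda>(x,t). pd (\<lambda>z. w z t) S i x))
   \<and> (\<forall>i j. continuous_on (S \<times> I) (\<lambda>(x,t). pd (pd (\<lambda>z. w z t) S i) S j x))"

definition C21 :: "(real^'n \<Rightarrow> real \<Rightarrow> real) \<Rightarrow> (real^'n) set \<Rightarrow> real set \<Rightarrow> bool" where
  "C21 w S I \<longleftrightarrow> C20 w S I
   \<and> (\<forall>x\<in>S. \<forall>t\<in>I. (\<lambda>s. w x s) differentiable (at t within I))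
   \<and> continuous_on (S \<times> I) (\<lambda>(x,t). tder w I x t)"

definition radial_on :: "(real^'n \<Rightarrow> real \<Rightarrow> real) \<Rightarrow> real \<Rightarrow> real set \<Rightarrow> bool" where
  "radial_on w R I \<longleftrightarrow> (\<forall>x y t. norm x \<le> R \<and> norm y \<le> R \<and> norm x = norm y \<and> t \<in> I
      \<longrightarrow> w x t = w y t)"

definition classical_solution ::
  "real \<Rightarrow> real \<Rightarrow> real \<Rightarrow> (real^'n \<Rightarrow> real) \<Rightarrow> ereal
   \<Rightarrow> (real^'n \<Rightarrow> real \<Rightarrow> real) \<Rightarrow> (real^'n \<Rightarrow> real \<Rightarrow> real) \<Rightarrow> bool" where
  "classical_solution R chi \<mu> u0 T u v \<longleftrightarrow>
    (let S = cball (0::real^'n) R; I = {t::real. 0 \<le> t \<and> ereal t < T};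
         gu = (\<lambda>t. sgrad (\<lambda>z. u z t) S); gv = (\<lambda>t. sgrad (\<lambda>z. v z t) S);
         A = (\<lambda>t y. (u y t / sqrt ((u y t)^2 + (norm (gu t y))^2)) *\<^sub>R gu t y);
         B = (\<lambda>t y. (u y t / sqrt (1 + (norm (gv t y))^2)) *\<^sub>R gv t y)
     in C21 u S I \<and> C20 v S I
      \<and> (\<forall>x\<in>S. \<forall>t\<in>I. u x t > 0 \<and> v x t > 0)
      \<and> radial_on u R I \<and> radial_on v R I
      \<and> (\<forall>x. norm x < R \<longrightarrow> (\<forall>t. 0 < t \<and> ereal t < T \<longrightarrow>
            tder u I x t = sdiv (A t) S x - chi * sdiv (B t) S x
          \<and> 0 = slap (\<lambda>z. v z t) S x - \<mu> + u x t))
      \<and> (\<forall>x. norm x = R \<longrightarrow> (\<forall>t. 0 < t \<and> ereal t < T \<longrightarrow>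
            (A t x - chi *\<^sub>R B t x) \<bullet> (inverse R *\<^sub>R x) = 0))
      \<and> (\<forall>x\<in>S. u x 0 = u0 x))"

end

theory Submission
  imports Defs
begin


lemma cont_int_compact:
  fixes f :: "'a::euclidean_space \<Rightarrow> real"
  assumes "compact S" "continuous_on S f"
  shows "f integrable_on S"
proof -
  have "integrable lborel (\<lambda>x. indicator S x *\<^sub>R f x)"
    by (rule borel_integrable_compact[OF assms])
  from has_integral_integral_lborel[OF this]
  have "((\<lambda>x. indicator S x *\<^sub>R f x) has_integral integral\<^sup>L lborel (\<lambda>x. indicator S x *\<^sub>R f x)) UNIV" .
  moreover have "(\<lambda>x. indicator S x *\<^sub>R f x) = (\<lambda>x. if x \<in> S then f x else 0)"
    by (auto simp: indicator_def)
  ultimately have "((\<lambda>x. if x \<in> S then f x else 0) has_integral integral\<^sup>L lborel (\<lambda>x. indicator S x *\<^sub>R f x)) UNIV" by simp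
  then show ?thesis unfolding has_integral_restrict_UNIV integrable_on_def by blast
qed

lemma pd_at:
  assumes "x \<in> interior S" "(f has_derivative f') (at x)"
  shows "pd f S i x = f' (axis i 1)"
  unfolding pd_def at_within_interior[OF assms(1)] frechet_derivative_at[OF assms(2), symmetric] ..

lemma norm_deriv:
  fixes x :: "'a::real_inner"
  assumes "x \<noteq> 0"
  shows "(norm has_derivative (\<lambda>h. inner x h / norm x)) (at x)"
  apply (rule has_derivative_eq_rhs[OF has_derivative_norm[OF assms]])
  by (auto simp: sgn_div_norm inner_commute divide_inverse mult.commute)

lemma sum_sq_norm: "(\<Sum>i\<in>UNIV. (x::real^'n) $ i * x $ i) = norm x ^ 2"
  by (simp add: power2_norm_eq_inner inner_vec_def)

lemma meas_ball: "measure lebesgue (ball (0::real^'n) r) = unit_ball_vol (real CARD('n)) * r ^ CARD('n)" if "r \<ge> 0"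
proof -
  have "measure lebesgue (ball (0::real^'n) r) = measure lborel (ball (0::real^'n) r)"
    by (simp add: measure_completion)
  also have "\<dots> = unit_ball_vol (real CARD('n)) * r ^ CARD('n)"
    using content_ball[OF that, where 'a="real^'n" and c=0] by simp
  finally show ?thesis .
qed

lemma lin_expand:
  assumes "linear D"
  shows "D (h::real^'n) = (\<Sum>i\<in>UNIV. h$i * D (axis i 1))"
proof -
  have "D h = D (\<Sum>i\<in>UNIV. h$i *\<^sub>R axis i 1)"
    using basis_expansion[of h] by (simp add: scalar_mult_eq_scaleR)
  also have "\<dots> = (\<Sum>i\<in>UNIV. h$i * D (axis i 1))"
    by (simp add: linear_sum[OF assms] linear_scale[OF assms])
  finally show ?thesis .
qed

lemma grad_deriv:
  fixes f :: "real^'n \<Rightarrow> real"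
  assumes "x \<in> interior S" "f differentiable (at x)"
  shows "(f has_derivative (\<lambda>h. inner (sgrad f S x) h)) (at x)"
proof -
  obtain D where D: "(f has_derivative D) (at x)" using assms(2) differentiable_def by blast
  have lin: "linear D" using D has_derivative_linear by blast
  have "D = (\<lambda>h. inner (sgrad f S x) h)"
  proof
    fix h :: "real^'n"
    show "D h = inner (sgrad f S x) h"
      unfolding lin_expand[OF lin, of h] sgrad_def inner_vec_def
      using pd_at[OF assms(1) D] by (simp add: mult.commute)
  qed
  with D show ?thesis by simp
qed

lemma radial_has_deriv:
  fixes f :: "real^'n \<Rightarrow> real"
  assumes "0 < norm x" "norm x < R" "\<forall>y. norm y < R \<longrightarrow> f y = g (norm y)"
    "(g has_real_derivative g') (at (norm x))"
  shows "(f has_derivative (\<lambda>h. g' * (inner x h / norm x))) (at x)"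
proof -
  have x0: "x \<noteq> 0" using assms(1) by auto
  have "((\<lambda>y. g (norm y)) has_derivative (\<lambda>h. g' * (inner x h / norm x))) (at x)"
    using has_derivative_compose[OF norm_deriv[OF x0] assms(4)[unfolded has_field_derivative_def]] .
  then show ?thesis
    apply (rule has_derivative_transform_within_open[where s="ball 0 R"])
    using assms by auto
qed

lemma pd_radial:
  fixes f :: "real^'n \<Rightarrow> real"
  assumes "0 < norm x" "norm x < R" "\<forall>y. norm y < R \<longrightarrow> f y = g (norm y)"
    "(g has_real_derivative g') (at (norm x))"
  shows "sgrad f (cball 0 R) x = (g' / norm x) *\<^sub>R x"
proof -
  have xi: "x \<in> interior (cball 0 R)" using assms by auto
  show ?thesis
    unfolding sgrad_def using pd_at[OF xi radial_has_deriv[OF assms]]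
    by (simp add: vec_eq_iff inner_axis)
qed

lemma radial_div:
  fixes F :: "real^'n \<Rightarrow> real^'n"
  assumes "0 < norm x" "norm x < R"
    "\<forall>y. 0 < norm y \<and> norm y < R \<longrightarrow> F y = (a (norm y) / norm y) *\<^sub>R y"
    "(a has_real_derivative a') (at (norm x))"
  shows "sdiv F (cball 0 R) x = a' + (real CARD('n) - 1) * a (norm x) / norm x"
proof -
  define \<rho> where "\<rho> = norm x"
  have x0: "x \<noteq> 0" using assms(1) by auto
  have rp: "\<rho> > 0" using assms(1) \<rho>_def by auto
  define qd where "qd = a' / \<rho> - a \<rho> / \<rho>^2"
  have q: "((\<lambda>s. a s / s) has_real_derivative qd) (at \<rho>)"
    unfolding qd_def using assms(4) rp unfolding \<rho>_def[symmetric]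
    by (auto intro!: derivative_eq_intros simp: field_simps power2_eq_square)
  have xi: "x \<in> interior (cball 0 R)" using assms by auto
  have comp: "pd (\<lambda>y. F y $ i) (cball 0 R) i x = a \<rho> / \<rho> + qd * (x$i / \<rho>) * x$i" for i
  proof -
    have d1: "((\<lambda>y. a (norm y) / norm y) has_derivative (\<lambda>h. qd * (inner x h / \<rho>))) (at x)"
      using has_derivative_compose[OF norm_deriv[OF x0] q[unfolded has_field_derivative_def \<rho>_def]]
      unfolding \<rho>_def .
    have d2: "((\<lambda>y. a (norm y) / norm y * y $ i) has_derivative
        (\<lambda>h. a (norm x) / norm x * h $ i + qd * (inner x h / \<rho>) * x $ i)) (at x)"
      using has_derivative_mult[OF d1 bounded_linear.has_derivative[OF bounded_linear_vec_nth has_derivative_ident]]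
      by simp
    have d3: "((\<lambda>y. F y $ i) has_derivative
        (\<lambda>h. a (norm x) / norm x * h $ i + qd * (inner x h / \<rho>) * x $ i)) (at x)"
      apply (rule has_derivative_transform_within_open[OF d2, where s="ball 0 R - {0}"])
      using assms by auto
    show ?thesis using pd_at[OF xi d3] by (simp add: inner_axis \<rho>_def)
  qed
  have "sdiv F (cball 0 R) x = (\<Sum>i\<in>UNIV. a \<rho> / \<rho> + qd / \<rho> * (x$i * x$i))"
    unfolding sdiv_def comp by (simp add: algebra_simps)
  also have "\<dots> = real CARD('n) * (a \<rho> / \<rho>) + qd / \<rho> * \<rho>^2"
    using sum_sq_norm[of x] by (simp add: sum.distrib sum_divide_distrib[symmetric] sum_distrib_left[symmetric] \<rho>_def del: sum_sq_norm)
  also have "\<dots> = a' + (real CARD('n) - 1) * a \<rho> / \<rho>"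
    unfolding qd_def using rp by (simp add: field_simps power2_eq_square)
  finally show ?thesis unfolding \<rho>_def .
qed


lemma grad0:
  fixes f :: "real^'n \<Rightarrow> real"
  assumes "R > 0" "\<forall>y. norm y < R \<longrightarrow> f (-y) = f y" "f differentiable (at 0)"
  shows "sgrad f (cball 0 R) 0 = 0"
proof -
  obtain D where D: "(f has_derivative D) (at 0)" using assms(3) differentiable_def by blast
  have lin: "linear D" using D has_derivative_linear by blast
  have m: "((\<lambda>y::real^'n. -y) has_derivative (\<lambda>h. -h)) (at 0)"
    by (rule has_derivative_minus[OF has_derivative_ident])
  have "((\<lambda>y. f (-y)) has_derivative (\<lambda>h. D (-h))) (at 0)"
    using has_derivative_compose[OF m, of f D] D by simp
  then have D2: "(f has_derivative (\<lambda>h. D (-h))) (at 0)"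
    apply (rule has_derivative_transform_within_open[where s="ball 0 R"])
    using assms by auto
  have DD: "D = (\<lambda>h. D (-h))" using has_derivative_unique[OF D D2] .
  have "D h = 0" for h
  proof -
    have "D h = D (-h)" using DD by metis
    also have "\<dots> = - D h" using linear_neg[OF lin] by simp
    finally show ?thesis by simp
  qed
  moreover have "0 \<in> interior (cball (0::real^'n) R)" using assms by simp
  ultimately show ?thesis unfolding sgrad_def using pd_at[OF _ D] by (simp add: vec_eq_iff)
qed

definition prof :: "(real^'n \<Rightarrow> real) \<Rightarrow> real^'n \<Rightarrow> real \<Rightarrow> real" where
  "prof w e s = w (s *\<^sub>R e)"

definition gprof :: "(real^'n \<Rightarrow> real) \<Rightarrow> real \<Rightarrow> real^'n \<Rightarrow> real \<Rightarrow> real" where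
  "gprof w R e s = inner (sgrad w (cball 0 R) (s *\<^sub>R e)) e"

lemma Ck2_unfold:
  "Ck 2 f S \<longleftrightarrow> continuous_on S f \<and> (\<forall>x\<in>S. f differentiable (at x within S)) \<and>
     (\<forall>i. continuous_on S (pd f S i) \<and> (\<forall>x\<in>S. pd f S i differentiable (at x within S)) \<and>
       (\<forall>j. continuous_on S (pd (pd f S i) S j)))"
  by (simp add: numeral_2_eq_2)

lemma diff_at_interior:
  "x \<in> interior S \<Longrightarrow> f differentiable (at x within S) \<Longrightarrow> f differentiable (at x)"
  by (metis at_within_interior)

locale radprof =
  fixes w :: "real^'n \<Rightarrow> real" and R :: real and e :: "real^'n"
  assumes Rpos: "R > 0" and C2: "Ck 2 w (cball 0 R)"
    and rad: "\<forall>x y. norm x \<le> R \<and> norm y \<le> R \<and> norm x = norm y \<longrightarrow> w x = w y"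
    and e1: "norm e = 1"
begin

abbreviation "S \<equiv> cball (0::real^'n) R"

lemma w_prof: "norm y \<le> R \<Longrightarrow> w y = prof w e (norm y)"
  unfolding prof_def using rad[rule_format, of y "norm y *\<^sub>R e"] e1 by simp

lemma C2d: "\<forall>x\<in>S. w differentiable (at x within S)"
  using C2 Ck2_unfold by blast
lemma C2pd: "\<forall>i. continuous_on S (pd w S i) \<and> (\<forall>x\<in>S. pd w S i differentiable (at x within S))"
  using C2 Ck2_unfold by blast
lemma C2c: "continuous_on S w"
  using C2 Ck2_unfold by blast

lemma w_diff: "norm y < R \<Longrightarrow> w differentiable (at y)"
proof -
  assume a: "norm y < R"
  have "y \<in> interior S" "y \<in> S" using a by auto
  then show ?thesis using diff_at_interior C2d by blast
qed

lemma pd_diff: "norm y < R \<Longrightarrow> pd w S i differentiable (at y)"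
proof -
  assume a: "norm y < R"
  have "y \<in> interior S" "y \<in> S" using a by auto
  then show ?thesis using diff_at_interior C2pd by blast
qed

lemma sgrad_cont: "continuous_on S (sgrad w S)"
  unfolding sgrad_def using C2pd by (intro continuous_on_vec_lambda) blast

lemma prof_deriv:
  assumes "0 \<le> s" "s < R"
  shows "(prof w e has_real_derivative gprof w R e s) (at s)"
proof -
  have n: "norm (s *\<^sub>R e) < R" using assms e1 by simp
  have i: "s *\<^sub>R e \<in> interior S" using n by simp
  have sc: "((\<lambda>s. s *\<^sub>R e) has_derivative (\<lambda>h. h *\<^sub>R e)) (at s)"
    by (rule has_derivative_scaleR_left[OF has_derivative_ident])
  have "((\<lambda>s. w (s *\<^sub>R e)) has_derivative (\<lambda>h. inner (sgrad w S (s *\<^sub>R e)) (h *\<^sub>R e))) (at s)"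
    using has_derivative_compose[OF sc grad_deriv[OF i w_diff[OF n]]] .
  moreover have "(\<lambda>h. inner (sgrad w S (s *\<^sub>R e)) (h *\<^sub>R e)) = (*) (gprof w R e s)"
    by (auto simp: gprof_def)
  ultimately show ?thesis unfolding has_field_derivative_def prof_def by simp
qed

lemma gprof_cont: "continuous_on {0..R} (gprof w R e)"
proof -
  have "continuous_on {0..R} (\<lambda>s. sgrad w S (s *\<^sub>R e))"
    apply (rule continuous_on_compose2[OF sgrad_cont])
     apply (intro continuous_intros)
    using e1 by auto
  then show ?thesis unfolding gprof_def by (intro continuous_intros)
qed

lemma prof_cont: "continuous_on {0..R} (prof w e)"
proof -
  have "continuous_on {0..R} (\<lambda>s. w (s *\<^sub>R e))"
    apply (rule continuous_on_compose2[OF C2c])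
     apply (intro continuous_intros)
    using e1 by auto
  then show ?thesis unfolding prof_def .
qed

lemma gprof_diff:
  assumes "0 \<le> s" "s < R"
  shows "gprof w R e differentiable (at s)"
proof -
  have n: "norm (s *\<^sub>R e) < R" using assms e1 by simp
  have eq: "gprof w R e = (\<lambda>s. \<Sum>i\<in>UNIV. pd w S i (s *\<^sub>R e) * e $ i)"
    unfolding gprof_def sgrad_def inner_vec_def by (simp add: mult.commute)
  have "(\<lambda>s. pd w S i (s *\<^sub>R e)) differentiable (at s)" for i
  proof -
    have "(\<lambda>s::real. s *\<^sub>R e) differentiable (at s)"
      by (rule derivative_intros)+
    then show ?thesis using differentiable_chain_at[of "\<lambda>s. s *\<^sub>R e" s "pd w S i"] pd_diff[OF n]
      by (simp add: o_def)
  qed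
  then have "(\<lambda>s. \<Sum>i\<in>UNIV. pd w S i (s *\<^sub>R e) * e $ i) differentiable (at s)"
    by (intro differentiable_sum ballI differentiable_mult differentiable_const) auto
  then show ?thesis using eq by simp
qed

lemma sgrad_radial:
  assumes "0 < norm y" "norm y < R"
  shows "sgrad w S y = (gprof w R e (norm y) / norm y) *\<^sub>R y"
proof (rule pd_radial[OF assms])
  show "\<forall>y. norm y < R \<longrightarrow> w y = prof w e (norm y)" using w_prof by simp
  show "(prof w e has_real_derivative gprof w R e (norm y)) (at (norm y))"
    using prof_deriv assms by simp
qed

lemma sgrad0: "sgrad w S 0 = 0"
proof (rule grad0[OF Rpos])
  show "\<forall>y. norm y < R \<longrightarrow> w (- y) = w y"
    using rad by simp
  show "w differentiable at 0" using w_diff Rpos by simp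
qed

lemma gprof0: "gprof w R e 0 = 0"
  using sgrad0 unfolding gprof_def by simp

end

lemma meas_cball: "measure lebesgue (cball (0::real^'n) r) = unit_ball_vol (real CARD('n)) * r ^ CARD('n)" if "r \<ge> 0"
proof -
  have "measure lebesgue (cball (0::real^'n) r) = measure lborel (cball (0::real^'n) r)"
    by (simp add: measure_completion)
  also have "\<dots> = unit_ball_vol (real CARD('n)) * r ^ CARD('n)"
    using content_cball[OF that, where 'a="real^'n" and c=0] by simp
  finally show ?thesis .
qed

lemma int_cball_const:
  "r \<ge> 0 \<Longrightarrow> integral (cball (0::real^'n) r) (\<lambda>_. c) = c * (unit_ball_vol (real CARD('n)) * r ^ CARD('n))"
proof -
  assume r: "r \<ge> 0"
  have "integral (cball (0::real^'n) r) (\<lambda>_. c) = integral (cball (0::real^'n) r) (\<lambda>_. c * 1)" by simp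
  also have "\<dots> = c * integral (cball (0::real^'n) r) (\<lambda>_. 1)" by (rule integral_mult_right)
  also have "\<dots> = c * measure lebesgue (cball (0::real^'n) r)"
    using lmeasure_integral[of "cball (0::real^'n) r"] lmeasurable_cball by metis
  finally show ?thesis using meas_cball[where 'n='n, OF r] by simp
qed

lemma ann_bound:
  fixes h :: "real^'n \<Rightarrow> real"
  assumes "0 \<le> a" "a \<le> b" "b \<le> R" "continuous_on (cball 0 R) h"
    "\<forall>y. a \<le> norm y \<and> norm y \<le> b \<longrightarrow> \<bar>h y\<bar> \<le> \<epsilon>"
  shows "\<bar>integral (cball 0 b) h - integral (cball 0 a) h\<bar>
     \<le> \<epsilon> * (unit_ball_vol (real CARD('n)) * b ^ CARD('n)) - \<epsilon> * (unit_ball_vol (real CARD('n)) * a ^ CARD('n))"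
proof -
  have sb: "cball (0::real^'n) b \<subseteq> cball 0 R" "cball (0::real^'n) a \<subseteq> cball 0 R" using assms by auto
  have ib: "h integrable_on cball 0 b"
    by (rule cont_int_compact) (auto intro: continuous_on_subset[OF assms(4) sb(1)])
  have ia: "h integrable_on cball 0 a"
    by (rule cont_int_compact) (auto intro: continuous_on_subset[OF assms(4) sb(2)])
  have sub: "cball (0::real^'n) a \<subseteq> cball 0 b" using assms by auto
  have neg: "negligible (cball (0::real^'n) a - cball 0 b)" using sub by simp
  have e1: "integral (cball 0 b - cball 0 a) h = integral (cball 0 b) h - integral (cball 0 a) h"
    by (rule integral_setdiff[OF ib ia neg])
  have hi: "h integrable_on (cball 0 b - cball 0 a)"
    by (rule integrable_setdiff[OF integrable_integral[OF ib] integrable_integral[OF ia] neg])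
  have lm: "cball (0::real^'n) b - cball 0 a \<in> lmeasurable"
    by (intro lmeasurable_compact fmeasurable_Diff) auto
  have ci: "(\<lambda>_. \<epsilon>) integrable_on (cball (0::real^'n) b - cball 0 a)"
    by (rule integrable_on_const[OF lm])
  have "norm (integral (cball 0 b - cball 0 a) h) \<le> integral (cball (0::real^'n) b - cball 0 a) (\<lambda>_. \<epsilon>)"
    apply (rule Henstock_Kurzweil_Integration.integral_norm_bound_integral)
    using hi ci assms(5) by auto
  also have "integral (cball (0::real^'n) b - cball 0 a) (\<lambda>_. \<epsilon>) = integral (cball (0::real^'n) b) (\<lambda>_. \<epsilon>) - integral (cball (0::real^'n) a) (\<lambda>_. \<epsilon>)"
    apply (rule integral_setdiff)
    using neg by (auto intro!: integrable_on_const lmeasurable_compact)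
  finally show ?thesis using e1 int_cball_const[where 'n='n, of b \<epsilon>] int_cball_const[where 'n='n, of a \<epsilon>] assms by simp
qed

lemma int_shift:
  fixes f :: "real^'n \<Rightarrow> real"
  assumes "0 \<le> c" "c \<le> R" "continuous_on (cball 0 R) f"
  shows "integral (cball 0 c) (\<lambda>y. f y - k) = integral (cball 0 c) f - k * (unit_ball_vol (real CARD('n)) * c ^ CARD('n))"
proof -
  have sb: "cball (0::real^'n) c \<subseteq> cball 0 R" using assms by auto
  have i1: "f integrable_on cball 0 c"
    by (rule cont_int_compact) (auto intro: continuous_on_subset[OF assms(3) sb])
  have i2: "(\<lambda>_. k) integrable_on cball (0::real^'n) c"
    by (rule integrable_on_const) (auto intro: lmeasurable_compact)
  show ?thesis using integral_diff[OF i1 i2] int_cball_const[where 'n='n, OF assms(1)] by simp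
qed

lemma ann_bound2:
  fixes f :: "real^'n \<Rightarrow> real"
  assumes "0 \<le> s" "s \<le> R" "0 \<le> r" "r \<le> R" "continuous_on (cball 0 R) f"
    "\<forall>y. norm y \<le> R \<longrightarrow> f y = g (norm y)"
    "\<forall>\<rho>. min s r \<le> \<rho> \<and> \<rho> \<le> max s r \<longrightarrow> \<bar>g \<rho> - k\<bar> \<le> \<epsilon>"
  shows "\<bar>integral (cball 0 s) f - integral (cball 0 r) f - k * unit_ball_vol (real CARD('n)) * (s ^ CARD('n) - r ^ CARD('n))\<bar>
     \<le> \<epsilon> * unit_ball_vol (real CARD('n)) * \<bar>s ^ CARD('n) - r ^ CARD('n)\<bar>"
proof -
  define a where "a = min s r"
  define b where "b = max s r"
  have h: "continuous_on (cball 0 R) (\<lambda>y. f y - k)" using assms(5) by (intro continuous_intros)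
  have B: "\<bar>integral (cball 0 b) (\<lambda>y. f y - k) - integral (cball 0 a) (\<lambda>y. f y - k)\<bar>
     \<le> \<epsilon> * (unit_ball_vol (real CARD('n)) * b ^ CARD('n)) - \<epsilon> * (unit_ball_vol (real CARD('n)) * a ^ CARD('n))"
  proof (rule ann_bound[OF _ _ _ h])
    show "0 \<le> a" "a \<le> b" "b \<le> R" using assms unfolding a_def b_def by auto
    show "\<forall>y. a \<le> norm y \<and> norm y \<le> b \<longrightarrow> \<bar>f y - k\<bar> \<le> \<epsilon>"
      using assms(6,7) \<open>b \<le> R\<close> unfolding a_def b_def by auto
  qed
  have Ia: "integral (cball 0 a) (\<lambda>y. f y - k) = integral (cball 0 a) f - k * (unit_ball_vol (real CARD('n)) * a ^ CARD('n))"
    by (rule int_shift[OF _ _ assms(5)]) (use assms in \<open>auto simp: a_def\<close>)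
  have Ib: "integral (cball 0 b) (\<lambda>y. f y - k) = integral (cball 0 b) f - k * (unit_ball_vol (real CARD('n)) * b ^ CARD('n))"
    by (rule int_shift[OF _ _ assms(5)]) (use assms in \<open>auto simp: b_def\<close>)
  show ?thesis
  proof (cases "r \<le> s")
    case True
    then have ab: "a = r" "b = s" unfolding a_def b_def by auto
    have "r ^ CARD('n) \<le> s ^ CARD('n)" using True assms by (simp add: power_mono)
    then show ?thesis using B Ia Ib ab by (simp add: algebra_simps)
  next
    case False
    then have ab: "a = s" "b = r" unfolding a_def b_def by auto
    have "s ^ CARD('n) \<le> r ^ CARD('n)" using False assms by (simp add: power_mono)
    then show ?thesis using B Ia Ib ab by (simp add: algebra_simps abs_minus_commute)
  qed
qed

lemma ball_int_deriv:
  fixes f :: "real^'n \<Rightarrow> real"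
  assumes "continuous_on (cball 0 R) f" "continuous_on {0..R} g"
    "\<forall>y. norm y \<le> R \<longrightarrow> f y = g (norm y)" "0 \<le> r" "r \<le> R"
  shows "((\<lambda>r. integral (cball 0 r) f) has_real_derivative
      (real CARD('n) * unit_ball_vol (real CARD('n)) * r ^ (CARD('n) - 1) * g r)) (at r within {0..R})"
proof -
  define N where "N = CARD('n)"
  define \<omega> where "\<omega> = unit_ball_vol (real CARD('n))"
  define F where "F = (\<lambda>r. integral (cball (0::real^'n) r) f)"
  have om: "\<omega> > 0" unfolding \<omega>_def by simp
  have pw: "((\<lambda>s. s ^ N) has_real_derivative (real N * r ^ (N - 1))) (at r within {0..R})"
    by (rule derivative_eq_intros refl)+ simp
  have pw': "\<forall>e>0. \<exists>d>0. \<forall>s\<in>{0..R}. norm (s - r) < d \<longrightarrow>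
      norm (s ^ N - r ^ N - real N * r ^ (N - 1) * (s - r)) \<le> e * norm (s - r)"
    using pw unfolding has_field_derivative_def has_derivative_within_alt by simp
  have gc: "\<forall>e>0. \<exists>d>0. \<forall>x'\<in>{0..R}. dist x' r < d \<longrightarrow> dist (g x') (g r) < e"
    using assms(2,4,5) unfolding continuous_on_iff by auto
  have main: "\<exists>d>0. \<forall>s\<in>{0..R}. norm (s - r) < d \<longrightarrow>
      norm (F s - F r - (real N * \<omega> * r ^ (N - 1) * g r) * (s - r)) \<le> e * norm (s - r)" if e: "e > 0" for e
  proof -
    define e2 where "e2 = min 1 (e / (2 * (\<bar>g r\<bar> * \<omega> + 1)))"
    define K where "K = real N * r ^ (N - 1) + 1"
    define e1 where "e1 = e / (2 * (\<omega> * K + 1))"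
    have Kp: "K > 0" unfolding K_def using assms(4) by (simp add: add_nonneg_pos)
    have e2p: "e2 > 0" unfolding e2_def using e om by (simp add: add_nonneg_pos)
    have e1p: "e1 > 0" unfolding e1_def using e om Kp by (simp add: add_nonneg_pos)
    obtain d2 where d2: "d2 > 0" "\<forall>s\<in>{0..R}. norm (s - r) < d2 \<longrightarrow>
      norm (s ^ N - r ^ N - real N * r ^ (N - 1) * (s - r)) \<le> e2 * norm (s - r)"
      using pw' e2p by blast
    obtain d1 where d1: "d1 > 0" "\<forall>x'\<in>{0..R}. dist x' r < d1 \<longrightarrow> dist (g x') (g r) < e1"
      using gc e1p by blast
    show ?thesis
    proof (intro exI[of _ "min d1 d2"] conjI ballI impI)
      show "min d1 d2 > 0" using d1 d2 by simp
      fix s assume s: "s \<in> {0..R}" and sd: "norm (s - r) < min d1 d2"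
      have gb: "\<forall>\<rho>. min s r \<le> \<rho> \<and> \<rho> \<le> max s r \<longrightarrow> \<bar>g \<rho> - g r\<bar> \<le> e1"
      proof (intro allI impI)
        fix \<rho> assume "min s r \<le> \<rho> \<and> \<rho> \<le> max s r"
        then have "\<rho> \<in> {0..R}" "dist \<rho> r < d1" using s sd assms(4,5) by (auto simp: dist_real_def)
        then show "\<bar>g \<rho> - g r\<bar> \<le> e1" using d1 by (force simp: dist_real_def)
      qed
      have A: "\<bar>F s - F r - g r * \<omega> * (s ^ N - r ^ N)\<bar> \<le> e1 * \<omega> * \<bar>s ^ N - r ^ N\<bar>"
        unfolding F_def N_def \<omega>_def
        by (rule ann_bound2[OF _ _ assms(4,5,1,3) gb]) (use s in auto)
      have P: "\<bar>s ^ N - r ^ N - real N * r ^ (N - 1) * (s - r)\<bar> \<le> e2 * \<bar>s - r\<bar>"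
        using d2(2) s sd by auto
      have P2: "\<bar>s ^ N - r ^ N\<bar> \<le> K * \<bar>s - r\<bar>"
      proof -
        have "\<bar>s ^ N - r ^ N\<bar> \<le> \<bar>real N * r ^ (N - 1) * (s - r)\<bar> + e2 * \<bar>s - r\<bar>"
          using P by linarith
        also have "\<dots> \<le> real N * r ^ (N - 1) * \<bar>s - r\<bar> + 1 * \<bar>s - r\<bar>"
          using assms(4) e2_def by (intro add_mono mult_right_mono) (auto simp: abs_mult)
        finally show ?thesis unfolding K_def by (simp add: algebra_simps)
      qed
      have "\<bar>F s - F r - (real N * \<omega> * r ^ (N - 1) * g r) * (s - r)\<bar>
          \<le> \<bar>F s - F r - g r * \<omega> * (s ^ N - r ^ N)\<bar> + \<bar>g r\<bar> * \<omega> * \<bar>s ^ N - r ^ N - real N * r ^ (N - 1) * (s - r)\<bar>"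
      proof -
        have "F s - F r - (real N * \<omega> * r ^ (N - 1) * g r) * (s - r)
           = (F s - F r - g r * \<omega> * (s ^ N - r ^ N)) + g r * \<omega> * (s ^ N - r ^ N - real N * r ^ (N - 1) * (s - r))"
          by (simp add: algebra_simps)
        then have "\<bar>F s - F r - (real N * \<omega> * r ^ (N - 1) * g r) * (s - r)\<bar>
           \<le> \<bar>F s - F r - g r * \<omega> * (s ^ N - r ^ N)\<bar> + \<bar>g r * \<omega> * (s ^ N - r ^ N - real N * r ^ (N - 1) * (s - r))\<bar>"
          by (metis abs_triangle_ineq)
        moreover have "\<bar>g r * \<omega> * (s ^ N - r ^ N - real N * r ^ (N - 1) * (s - r))\<bar>
            = \<bar>g r\<bar> * \<omega> * \<bar>s ^ N - r ^ N - real N * r ^ (N - 1) * (s - r)\<bar>"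
          using om by (simp add: abs_mult)
        ultimately show ?thesis by linarith
      qed
      also have "\<dots> \<le> e1 * \<omega> * (K * \<bar>s - r\<bar>) + \<bar>g r\<bar> * \<omega> * (e2 * \<bar>s - r\<bar>)"
      proof (rule add_mono)
        show "\<bar>F s - F r - g r * \<omega> * (s ^ N - r ^ N)\<bar> \<le> e1 * \<omega> * (K * \<bar>s - r\<bar>)"
          using A P2 e1p om by (meson mult_left_mono order_trans mult_nonneg_nonneg less_imp_le)
        show "\<bar>g r\<bar> * \<omega> * \<bar>s ^ N - r ^ N - real N * r ^ (N - 1) * (s - r)\<bar> \<le> \<bar>g r\<bar> * \<omega> * (e2 * \<bar>s - r\<bar>)"
          using P om by (intro mult_left_mono) auto
      qed
      also have "\<dots> = (e1 * \<omega> * K + \<bar>g r\<bar> * \<omega> * e2) * \<bar>s - r\<bar>" by (simp add: algebra_simps)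
      also have "\<dots> \<le> e * \<bar>s - r\<bar>"
      proof (rule mult_right_mono)
        have a1: "e1 * \<omega> * K \<le> e / 2"
        proof -
          have "e1 * \<omega> * K = e * (\<omega> * K) / (2 * (\<omega> * K + 1))" unfolding e1_def by simp
          also have "\<dots> = (e / 2) * (\<omega> * K / (\<omega> * K + 1))" by simp
          also have "\<dots> \<le> (e / 2) * 1"
            apply (rule mult_left_mono) using om Kp e by (auto simp: divide_le_eq_1 add_pos_pos)
          finally show ?thesis by simp
        qed
        have a2: "\<bar>g r\<bar> * \<omega> * e2 \<le> e / 2"
        proof -
          have "\<bar>g r\<bar> * \<omega> * e2 \<le> \<bar>g r\<bar> * \<omega> * (e / (2 * (\<bar>g r\<bar> * \<omega> + 1)))"
            unfolding e2_def using om by (intro mult_left_mono) auto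
          also have "\<dots> = (e / 2) * (\<bar>g r\<bar> * \<omega> / (\<bar>g r\<bar> * \<omega> + 1))" by simp
          also have "\<dots> \<le> (e / 2) * 1"
            apply (rule mult_left_mono) using om e by (auto simp: divide_le_eq_1 add_nonneg_pos)
          finally show ?thesis by simp
        qed
        show "e1 * \<omega> * K + \<bar>g r\<bar> * \<omega> * e2 \<le> e" using a1 a2 by simp
      qed simp
      finally show "norm (F s - F r - (real N * \<omega> * r ^ (N - 1) * g r) * (s - r)) \<le> e * norm (s - r)"
        by simp
    qed
  qed
  have "(F has_derivative (\<lambda>h. (real N * \<omega> * r ^ (N - 1) * g r) * h)) (at r within {0..R})"
    unfolding has_derivative_within_alt using main by (simp add: bounded_linear_mult_right)
  then have "(F has_derivative (*) (real N * \<omega> * r ^ (N - 1) * g r)) (at r within {0..R})"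
    by (metis (no_types, lifting) ext)
  then show ?thesis unfolding has_field_derivative_def F_def N_def \<omega>_def .
qed

lemma polar:
  fixes f :: "real^'n \<Rightarrow> real"
  assumes "0 \<le> R" "continuous_on (cball 0 R) f" "continuous_on {0..R} g"
    "\<forall>y. norm y \<le> R \<longrightarrow> f y = g (norm y)"
  shows "integral (ball 0 R) f = real CARD('n) * unit_ball_vol (real CARD('n)) * integral {0..R} (\<lambda>s. s ^ (CARD('n) - 1) * g s)"
proof -
  define c where "c = real CARD('n) * unit_ball_vol (real CARD('n))"
  have "((\<lambda>s. c * (s ^ (CARD('n) - 1) * g s)) has_integral
      (integral (cball (0::real^'n) R) f - integral (cball 0 0) f)) {0..R}"
  proof (rule fundamental_theorem_of_calculus[OF assms(1)])
    fix x assume "x \<in> {0..R}"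
    then show "((\<lambda>r. integral (cball (0::real^'n) r) f) has_vector_derivative c * (x ^ (CARD('n) - 1) * g x)) (at x within {0..R})"
      using ball_int_deriv[OF assms(2,3,4), of x] unfolding c_def
      by (simp add: has_real_derivative_iff_has_vector_derivative[symmetric] mult_ac)
  qed
  then have "((\<lambda>s. c * (s ^ (CARD('n) - 1) * g s)) has_integral integral (cball (0::real^'n) R) f) {0..R}"
    by simp
  then have "integral (cball (0::real^'n) R) f = c * integral {0..R} (\<lambda>s. s ^ (CARD('n) - 1) * g s)"
    by (metis integral_mult_right integral_unique)
  moreover have "integral (ball (0::real^'n) R) f = integral (cball 0 R) f"
    by (rule integral_spike_set) (auto intro: negligible_subset[OF negligible_sphere[of "0::real^'n" R]])
  ultimately show ?thesis unfolding c_def by simp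
qed

lemma pow_aux:
  assumes "0 < s" "1 \<le> N"
  shows "real (N - 1) * s ^ (N - 1 - 1) = (real N - 1) * s ^ (N - 1) / s"
proof (cases "N = 1")
  case True then show ?thesis by simp
next
  case False
  then have "2 \<le> N" using assms(2) by linarith
  then obtain k where k: "N = 2 + k" using le_Suc_ex by blast
  have e1: "N - 1 - 1 = k" "N - 1 = Suc k" using k by auto
  have e2: "real (N - 1) = real N - 1" using assms(2) by (simp add: of_nat_diff)
  show ?thesis unfolding e1 e2 using assms(1) k by simp
qed

lemma sqrt_diff:
  assumes "q differentiable (at s)" "q s > 0"
  shows "(\<lambda>s. sqrt (q s)) differentiable (at (s::real))"
proof -
  have "sqrt differentiable (at (q s))"
    using DERIV_real_sqrt[OF assms(2)] real_differentiable_def by blast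
  then show ?thesis using differentiable_chain_at[OF assms(1)] by (simp add: o_def)
qed

lemma tder_vd:
  fixes w :: "real \<Rightarrow> real"
  assumes "w differentiable (at t within I)"
  shows "(w has_vector_derivative (frechet_derivative w (at t within I) 1)) (at t within I)"
proof -
  have D: "(w has_derivative frechet_derivative w (at t within I)) (at t within I)"
    using assms frechet_derivative_works by blast
  have lin: "linear (frechet_derivative w (at t within I))" using D has_derivative_linear by blast
  have "frechet_derivative w (at t within I) = (\<lambda>h. h *\<^sub>R frechet_derivative w (at t within I) 1)"
  proof
    fix h :: real
    show "frechet_derivative w (at t within I) h = h *\<^sub>R frechet_derivative w (at t within I) 1"
      using linear_scale[OF lin, of h 1] by simp
  qed
  then show ?thesis using D unfolding has_vector_derivative_def by metis
qed

lemma le_closure_Icc: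
  fixes f :: "real \<Rightarrow> real"
  assumes "a < b" "continuous_on {a..b} f" "\<forall>s. a < s \<and> s < b \<longrightarrow> f s \<le> M" "x \<in> {a..b}"
  shows "f x \<le> M"
  apply (rule continuous_le_on_closure[where S="{a<..<b}" and a=M and f=f])
  using assms by (auto simp: closure_greaterThanLessThan)

lemma int_pow:
  assumes "0 \<le> r" "1 \<le> N"
  shows "((\<lambda>s. s ^ (N - 1)) has_integral r ^ N / real N) {0..r}"
proof -
  have "((\<lambda>s. s ^ (N - 1)) has_integral (r ^ N / real N - 0 ^ N / real N)) {0..r}"
  proof (rule fundamental_theorem_of_calculus[OF assms(1)])
    fix x assume "x \<in> {0..r}"
    have "((\<lambda>s. s ^ N) has_real_derivative (real N * x ^ (N - 1))) (at x within {0..r})"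
      by (rule derivative_eq_intros refl)+ simp
    then have "((\<lambda>s. s ^ N / real N) has_real_derivative (real N * x ^ (N - 1) / real N)) (at x within {0..r})"
      by (rule DERIV_cdivide)
    then show "((\<lambda>s. s ^ N / real N) has_vector_derivative x ^ (N - 1)) (at x within {0..r})"
      using assms(2) by (simp add: has_real_derivative_iff_has_vector_derivative[symmetric])
  qed
  moreover have "(0::real) ^ N = 0" using assms(2) by simp
  ultimately show ?thesis by simp
qed

lemma flux_zero:
  fixes w W :: "real^'n \<Rightarrow> real" and T :: "real \<Rightarrow> real"
  assumes rw: "radprof w R e" and rW: "radprof W R e"
    and pos: "\<forall>x\<in>cball 0 R. w x > 0"
    and Adef: "A = (\<lambda>y. (w y / sqrt ((w y)^2 + (norm (sgrad w (cball 0 R) y))^2)) *\<^sub>R sgrad w (cball 0 R) y)"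
    and Bdef: "B = (\<lambda>y. (w y / sqrt (1 + (norm (sgrad W (cball 0 R) y))^2)) *\<^sub>R sgrad W (cball 0 R) y)"
    and eq: "\<forall>s. 0 < s \<and> s < R \<longrightarrow> T s = sdiv A (cball 0 R) (s *\<^sub>R e) - chi * sdiv B (cball 0 R) (s *\<^sub>R e)"
    and bc: "(A (R *\<^sub>R e) - chi *\<^sub>R B (R *\<^sub>R e)) \<bullet> (inverse R *\<^sub>R (R *\<^sub>R e)) = 0"
  shows "((\<lambda>s. s ^ (CARD('n) - 1) * T s) has_integral 0) {0..R}"
proof -
  interpret U: radprof w R e by (rule rw)
  interpret V: radprof W R e by (rule rW)
  define N where "N = CARD('n)"
  have N1: "1 \<le> N" unfolding N_def by (simp add: Suc_leI)
  define g where "g = prof w e"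
  define G where "G = gprof w R e"
  define H where "H = gprof W R e"
  define hA where "hA = (\<lambda>s. g s * G s / sqrt ((g s)^2 + (G s)^2))"
  define hB where "hB = (\<lambda>s. g s * H s / sqrt (1 + (H s)^2))"
  have gpos: "g s > 0" if "0 \<le> s" "s \<le> R" for s
    unfolding g_def prof_def using pos that U.e1 by simp
  have Arad: "\<forall>y. 0 < norm y \<and> norm y < R \<longrightarrow> A y = (hA (norm y) / norm y) *\<^sub>R y"
  proof (intro allI impI)
    fix y :: "real^'n" assume y: "0 < norm y \<and> norm y < R"
    have sg: "sgrad w (cball 0 R) y = (G (norm y) / norm y) *\<^sub>R y"
      unfolding G_def using U.sgrad_radial y by simp
    have ng: "norm (sgrad w (cball 0 R) y) = \<bar>G (norm y)\<bar>" using y unfolding sg by simp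
    have wy: "w y = g (norm y)" unfolding g_def using U.w_prof y by simp
    show "A y = (hA (norm y) / norm y) *\<^sub>R y"
      unfolding Adef hA_def using ng wy sg by simp
  qed
  have Brad: "\<forall>y. 0 < norm y \<and> norm y < R \<longrightarrow> B y = (hB (norm y) / norm y) *\<^sub>R y"
  proof (intro allI impI)
    fix y :: "real^'n" assume y: "0 < norm y \<and> norm y < R"
    have sg: "sgrad W (cball 0 R) y = (H (norm y) / norm y) *\<^sub>R y"
      unfolding H_def using V.sgrad_radial y by simp
    have ng: "norm (sgrad W (cball 0 R) y) = \<bar>H (norm y)\<bar>" using y unfolding sg by simp
    have wy: "w y = g (norm y)" unfolding g_def using U.w_prof y by simp
    show "B y = (hB (norm y) / norm y) *\<^sub>R y"
      unfolding Bdef hB_def using ng wy sg by simp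
  qed
  have ee: "e \<bullet> e = 1" using U.e1 by (simp add: power2_norm_eq_inner[symmetric])
  have gd: "g differentiable (at s)" if "0 < s" "s < R" for s
    unfolding g_def using U.prof_deriv[of s] that real_differentiable_def by force
  have Gd: "G differentiable (at s)" if "0 < s" "s < R" for s
    unfolding G_def using U.gprof_diff[of s] that by simp
  have Hd: "H differentiable (at s)" if "0 < s" "s < R" for s
    unfolding H_def using V.gprof_diff[of s] that by simp
  have hAd: "hA differentiable (at s)" if s: "0 < s" "s < R" for s
  proof -
    have "(\<lambda>s. sqrt ((g s)^2 + (G s)^2)) differentiable (at s)"
      apply (rule sqrt_diff)
      using gd[OF s] Gd[OF s] gpos[of s] s by (auto intro!: derivative_intros add_pos_nonneg)
    moreover have "sqrt ((g s)^2 + (G s)^2) \<noteq> 0" using gpos[of s] s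
      by (simp add: add_pos_nonneg)
    ultimately show ?thesis unfolding hA_def using gd[OF s] Gd[OF s]
      by (intro derivative_intros) auto
  qed
  have hBd: "hB differentiable (at s)" if s: "0 < s" "s < R" for s
  proof -
    have "(\<lambda>s. sqrt (1 + (H s)^2)) differentiable (at s)"
      apply (rule sqrt_diff)
      using Hd[OF s] by (auto intro!: derivative_intros add_pos_nonneg)
    moreover have "sqrt (1 + (H s)^2) \<noteq> 0"
      by (metis add_pos_nonneg real_sqrt_eq_zero_cancel_iff zero_le_power2 zero_less_one less_irrefl)
    ultimately show ?thesis unfolding hB_def using gd[OF s] Hd[OF s]
      by (intro derivative_intros) auto
  qed
  have divA: "sdiv A (cball 0 R) (s *\<^sub>R e) = deriv hA s + (real N - 1) * hA s / s" if s: "0 < s" "s < R" for s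
  proof -
    have "sdiv A (cball 0 R) (s *\<^sub>R e) = deriv hA (norm (s *\<^sub>R e)) + (real CARD('n) - 1) * hA (norm (s *\<^sub>R e)) / norm (s *\<^sub>R e)"
      apply (rule radial_div[OF _ _ Arad])
      using s U.e1 hAd[OF s] by (auto simp: DERIV_deriv_iff_real_differentiable)
    then show ?thesis using s U.e1 unfolding N_def by simp
  qed
  have divB: "sdiv B (cball 0 R) (s *\<^sub>R e) = deriv hB s + (real N - 1) * hB s / s" if s: "0 < s" "s < R" for s
  proof -
    have "sdiv B (cball 0 R) (s *\<^sub>R e) = deriv hB (norm (s *\<^sub>R e)) + (real CARD('n) - 1) * hB (norm (s *\<^sub>R e)) / norm (s *\<^sub>R e)"
      apply (rule radial_div[OF _ _ Brad])
      using s U.e1 hBd[OF s] by (auto simp: DERIV_deriv_iff_real_differentiable)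
    then show ?thesis using s U.e1 unfolding N_def by simp
  qed
  define a where "a = (\<lambda>s. (A (s *\<^sub>R e) - chi *\<^sub>R B (s *\<^sub>R e)) \<bullet> e)"
  have aint: "a s = hA s - chi * hB s" if s: "0 < s" "s < R" for s
  proof -
    have "A (s *\<^sub>R e) = (hA s / s) *\<^sub>R (s *\<^sub>R e)" using Arad[rule_format, of "s *\<^sub>R e"] s U.e1 by simp
    moreover have "B (s *\<^sub>R e) = (hB s / s) *\<^sub>R (s *\<^sub>R e)" using Brad[rule_format, of "s *\<^sub>R e"] s U.e1 by simp
    ultimately show ?thesis unfolding a_def using s ee by (simp add: inner_diff_left)
  qed
  define \<Phi> where "\<Phi> = (\<lambda>s. s ^ (N - 1) * a s)"
  have Acont: "continuous_on (cball 0 R) A"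
  proof -
    have "\<forall>y\<in>cball 0 R. sqrt ((w y)^2 + (norm (sgrad w (cball 0 R) y))^2) \<noteq> 0"
      using pos by (auto simp: add_pos_nonneg)
    then show ?thesis unfolding Adef using U.C2c U.sgrad_cont
      by (intro continuous_intros) auto
  qed
  have Bcont: "continuous_on (cball 0 R) B"
  proof -
    have "\<forall>y\<in>cball 0 R. sqrt (1 + (norm (sgrad W (cball 0 R) y))^2) \<noteq> 0"
      by (metis add_pos_nonneg real_sqrt_eq_zero_cancel_iff zero_le_power2 zero_less_one less_irrefl)
    then show ?thesis unfolding Bdef using U.C2c V.sgrad_cont
      by (intro continuous_intros) auto
  qed
  have se: "continuous_on {0..R} (\<lambda>s. s *\<^sub>R e)" by (intro continuous_intros)
  have img: "(\<lambda>s. s *\<^sub>R e) ` {0..R} \<subseteq> cball 0 R" using U.e1 by auto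
  have acont: "continuous_on {0..R} a"
  proof -
    have "continuous_on {0..R} (\<lambda>s. A (s *\<^sub>R e))"
      using continuous_on_compose[OF se continuous_on_subset[OF Acont img]] by (simp add: o_def)
    moreover have "continuous_on {0..R} (\<lambda>s. B (s *\<^sub>R e))"
      using continuous_on_compose[OF se continuous_on_subset[OF Bcont img]] by (simp add: o_def)
    ultimately show ?thesis unfolding a_def by (intro continuous_intros)
  qed
  have Phicont: "continuous_on {0..R} \<Phi>" unfolding \<Phi>_def using acont by (intro continuous_intros)
  have Phider: "(\<Phi> has_vector_derivative s ^ (N - 1) * T s) (at s)" if s: "s \<in> {0<..<R}" for s
  proof -
    have s': "0 < s" "s < R" using s by auto
    have hA': "(hA has_real_derivative deriv hA s) (at s)"
      using hAd[OF s'] by (simp add: DERIV_deriv_iff_real_differentiable)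
    have hB': "(hB has_real_derivative deriv hB s) (at s)"
      using hBd[OF s'] by (simp add: DERIV_deriv_iff_real_differentiable)
    have d: "((\<lambda>s. s ^ (N - 1) * (hA s - chi * hB s)) has_real_derivative
        (real (N - 1) * s ^ (N - 1 - 1) * (hA s - chi * hB s) + s ^ (N - 1) * (deriv hA s - chi * deriv hB s))) (at s)"
      by (rule derivative_eq_intros refl hA' hB')+ (simp add: algebra_simps)
    have val: "real (N - 1) * s ^ (N - 1 - 1) * (hA s - chi * hB s) + s ^ (N - 1) * (deriv hA s - chi * deriv hB s)
        = s ^ (N - 1) * T s"
    proof -
      have Ts: "T s = deriv hA s + (real N - 1) * hA s / s - chi * (deriv hB s + (real N - 1) * hB s / s)"
        using eq[rule_format, OF conjI[OF s']] divA[OF s'] divB[OF s'] by simp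
      show ?thesis unfolding Ts pow_aux[OF s'(1) N1] using s'(1) by (simp add: field_simps)
    qed
    have "(\<Phi> has_real_derivative s ^ (N - 1) * T s) (at s)"
      apply (rule has_field_derivative_transform_within_open[OF d[unfolded val], where S="{0<..<R}"])
      using s aint unfolding \<Phi>_def by auto
    then show ?thesis by (simp add: has_real_derivative_iff_has_vector_derivative)
  qed
  have PhiR: "\<Phi> R = 0"
  proof -
    have "inverse R *\<^sub>R (R *\<^sub>R e) = e" using U.Rpos by simp
    then show ?thesis using bc unfolding \<Phi>_def a_def by simp
  qed
  have Phi0: "\<Phi> 0 = 0"
  proof -
    have "A 0 = 0" unfolding Adef using U.sgrad0 by simp
    moreover have "B 0 = 0" unfolding Bdef using V.sgrad0 by simp
    ultimately show ?thesis unfolding \<Phi>_def a_def by simp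
  qed
  have "((\<lambda>s. s ^ (N - 1) * T s) has_integral (\<Phi> R - \<Phi> 0)) {0..R}"
    by (rule fundamental_theorem_of_calculus_interior[OF _ Phicont Phider]) (use U.Rpos in auto)
  then show ?thesis using PhiR Phi0 unfolding N_def by simp
qed

lemma v_ode:
  fixes W :: "real^'n \<Rightarrow> real"
  assumes rW: "radprof W R e"
    and eq: "\<forall>s. 0 < s \<and> s < R \<longrightarrow> 0 = slap W (cball 0 R) (s *\<^sub>R e) - mu + q s"
  shows "\<forall>s. 0 < s \<and> s < R \<longrightarrow> deriv (gprof W R e) s = mu - q s - (real CARD('n) - 1) * gprof W R e s / s"
    and "\<forall>r. 0 < r \<and> r < R \<longrightarrow> ((\<lambda>s. s ^ (CARD('n) - 1) * (mu - q s)) has_integral r ^ (CARD('n) - 1) * gprof W R e r) {0..r}"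
proof -
  interpret V: radprof W R e by (rule rW)
  define N where "N = CARD('n)"
  have N1: "1 \<le> N" unfolding N_def by (simp add: Suc_leI)
  define G where "G = gprof W R e"
  have Gd: "(G has_real_derivative deriv G s) (at s)" if "0 < s" "s < R" for s
    unfolding G_def using V.gprof_diff[of s] that by (simp add: DERIV_deriv_iff_real_differentiable)
  have lap: "slap W (cball 0 R) (s *\<^sub>R e) = deriv G s + (real N - 1) * G s / s" if s: "0 < s" "s < R" for s
  proof -
    have "sdiv (sgrad W (cball 0 R)) (cball 0 R) (s *\<^sub>R e) = deriv G (norm (s *\<^sub>R e)) + (real CARD('n) - 1) * G (norm (s *\<^sub>R e)) / norm (s *\<^sub>R e)"
      apply (rule radial_div)
      using s V.e1 Gd[OF s] V.sgrad_radial unfolding G_def by auto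
    then show ?thesis using s V.e1 unfolding N_def slap_def by simp
  qed
  have dG: "deriv G s = mu - q s - (real N - 1) * G s / s" if s: "0 < s" "s < R" for s
    using lap[OF s] eq[rule_format, OF conjI[OF s]] by simp
  then show "\<forall>s. 0 < s \<and> s < R \<longrightarrow> deriv (gprof W R e) s = mu - q s - (real CARD('n) - 1) * gprof W R e s / s"
    unfolding G_def N_def by blast
  show "\<forall>r. 0 < r \<and> r < R \<longrightarrow> ((\<lambda>s. s ^ (CARD('n) - 1) * (mu - q s)) has_integral r ^ (CARD('n) - 1) * gprof W R e r) {0..r}"
  proof (intro allI impI)
    fix r assume r: "0 < r \<and> r < R"
    define \<Psi> where "\<Psi> = (\<lambda>s. s ^ (N - 1) * G s)"
    have c: "continuous_on {0..r} \<Psi>" unfolding \<Psi>_def G_def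
      using continuous_on_subset[OF V.gprof_cont, of "{0..r}"] r by (intro continuous_intros) auto
    have d: "(\<Psi> has_vector_derivative s ^ (N - 1) * (mu - q s)) (at s)" if s: "s \<in> {0<..<r}" for s
    proof -
      have s': "0 < s" "s < R" using s r by auto
      have "(\<Psi> has_real_derivative (real (N - 1) * s ^ (N - 1 - 1) * G s + s ^ (N - 1) * deriv G s)) (at s)"
        unfolding \<Psi>_def by (rule derivative_eq_intros refl Gd[OF s'])+ (simp add: algebra_simps)
      moreover have "real (N - 1) * s ^ (N - 1 - 1) * G s + s ^ (N - 1) * deriv G s = s ^ (N - 1) * (mu - q s)"
        unfolding dG[OF s'] pow_aux[OF s'(1) N1] using s'(1) by (simp add: field_simps)
      ultimately show ?thesis by (simp add: has_real_derivative_iff_has_vector_derivative)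
    qed
    have "((\<lambda>s. s ^ (N - 1) * (mu - q s)) has_integral (\<Psi> r - \<Psi> 0)) {0..r}"
      by (rule fundamental_theorem_of_calculus_interior[OF _ c d]) (use r in auto)
    moreover have "\<Psi> 0 = 0" unfolding \<Psi>_def G_def using V.gprof0 by simp
    ultimately have "((\<lambda>s. s ^ (N - 1) * (mu - q s)) has_integral \<Psi> r) {0..r}" by simp
    then show "((\<lambda>s. s ^ (CARD('n) - 1) * (mu - q s)) has_integral r ^ (CARD('n) - 1) * gprof W R e r) {0..r}"
      unfolding \<Psi>_def G_def N_def .
  qed
qed


lemma mass_cons:
  fixes u :: "real^'n \<Rightarrow> real \<Rightarrow> real"
  assumes R: "0 \<le> R" and t: "0 \<le> t" and tI: "{0..t} \<subseteq> I" and e1: "norm e = 1"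
    and diff: "\<forall>x\<in>cball 0 R. \<forall>\<tau>\<in>I. (\<lambda>s. u x s) differentiable (at \<tau> within I)"
    and cu: "continuous_on (cball 0 R \<times> I) (\<lambda>(x,\<tau>). u x \<tau>)"
    and ct: "continuous_on (cball 0 R \<times> I) (\<lambda>(x,\<tau>). tder u I x \<tau>)"
    and flux: "\<forall>\<tau>. 0 < \<tau> \<and> \<tau> \<le> t \<longrightarrow> ((\<lambda>s. s ^ (CARD('n) - 1) * tder u I (s *\<^sub>R e) \<tau>) has_integral 0) {0..R}"
  shows "integral {0..R} (\<lambda>s. s ^ (CARD('n) - 1) * u (s *\<^sub>R e) t) = integral {0..R} (\<lambda>s. s ^ (CARD('n) - 1) * u (s *\<^sub>R e) 0)"
proof -
  define N where "N = CARD('n)"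
  define K where "K = (\<lambda>s \<tau>. s ^ (N - 1) * tder u I (s *\<^sub>R e) \<tau>)"
  have img: "(\<lambda>(s,\<tau>). (s *\<^sub>R e, \<tau>)) ` ({0..R} \<times> {0..t}) \<subseteq> cball 0 R \<times> I"
    using e1 tI by auto
  have cg: "continuous_on ({0..R} \<times> {0..t}) (\<lambda>(s,\<tau>). (s *\<^sub>R e, \<tau>))"
    by (simp add: case_prod_beta') (intro continuous_intros)
  have cT: "continuous_on ({0..R} \<times> {0..t}) (\<lambda>(s,\<tau>). tder u I (s *\<^sub>R e) \<tau>)"
    using continuous_on_compose[OF cg continuous_on_subset[OF ct img]] by (simp add: o_def case_prod_beta')
  have cK: "continuous_on (cbox (0,0) (R,t)) (\<lambda>(s,\<tau>). K s \<tau>)"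
  proof -
    have "continuous_on ({0..R} \<times> {0..t}) (\<lambda>p. fst p ^ (N - 1) * (\<lambda>(s,\<tau>). tder u I (s *\<^sub>R e) \<tau>) p)"
      using cT by (intro continuous_intros)
    then show ?thesis unfolding K_def by (simp add: cbox_Pair_eq case_prod_beta')
  qed
  have ftc: "((\<lambda>\<tau>. tder u I (s *\<^sub>R e) \<tau>) has_integral (u (s *\<^sub>R e) t - u (s *\<^sub>R e) 0)) {0..t}"
    if s: "s \<in> {0..R}" for s
  proof (rule fundamental_theorem_of_calculus[OF t])
    fix \<tau> assume \<tau>: "\<tau> \<in> {0..t}"
    have x: "s *\<^sub>R e \<in> cball 0 R" using s e1 by auto
    have "((\<lambda>\<sigma>. u (s *\<^sub>R e) \<sigma>) has_vector_derivative tder u I (s *\<^sub>R e) \<tau>) (at \<tau> within I)"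
      unfolding tder_def using tder_vd diff x \<tau> tI by blast
    then show "((\<lambda>\<sigma>. u (s *\<^sub>R e) \<sigma>) has_vector_derivative tder u I (s *\<^sub>R e) \<tau>) (at \<tau> within {0..t})"
      using has_vector_derivative_within_subset tI by blast
  qed
  have "integral {0..R} (\<lambda>s. integral {0..t} (K s)) = integral {0..t} (\<lambda>\<tau>. integral {0..R} (\<lambda>s. K s \<tau>))"
    using integral_swap_continuous[OF cK] by simp
  also have "\<dots> = integral {0..t} (\<lambda>\<tau>. 0)"
  proof (rule integral_spike[where S="{0}"])
    show "negligible {0::real}" by simp
    fix \<tau> assume "\<tau> \<in> {0..t} - {0}"
    then have "0 < \<tau> \<and> \<tau> \<le> t" by auto
    then show "0 = integral {0..R} (\<lambda>s. K s \<tau>)"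
      using flux unfolding K_def N_def by (metis integral_unique)
  qed
  also have "\<dots> = 0" by simp
  finally have Z: "integral {0..R} (\<lambda>s. integral {0..t} (K s)) = 0" .
  have "integral {0..R} (\<lambda>s. integral {0..t} (K s)) = integral {0..R} (\<lambda>s. s ^ (N - 1) * u (s *\<^sub>R e) t - s ^ (N - 1) * u (s *\<^sub>R e) 0)"
  proof (rule integral_cong)
    fix s assume s: "s \<in> {0..R}"
    have "integral {0..t} (K s) = s ^ (N - 1) * integral {0..t} (\<lambda>\<tau>. tder u I (s *\<^sub>R e) \<tau>)"
      unfolding K_def by (rule integral_mult_right)
    also have "\<dots> = s ^ (N - 1) * (u (s *\<^sub>R e) t - u (s *\<^sub>R e) 0)"
      using integral_unique[OF ftc[OF s]] by simp
    finally show "integral {0..t} (K s) = s ^ (N - 1) * u (s *\<^sub>R e) t - s ^ (N - 1) * u (s *\<^sub>R e) 0"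
      by (simp add: algebra_simps)
  qed
  moreover have "integral {0..R} (\<lambda>s. s ^ (N - 1) * u (s *\<^sub>R e) t - s ^ (N - 1) * u (s *\<^sub>R e) 0)
     = integral {0..R} (\<lambda>s. s ^ (N - 1) * u (s *\<^sub>R e) t) - integral {0..R} (\<lambda>s. s ^ (N - 1) * u (s *\<^sub>R e) 0)"
  proof (rule integral_diff)
    have img2: "(\<lambda>s. (s *\<^sub>R e, \<sigma>)) ` {0..R} \<subseteq> cball 0 R \<times> I" if "\<sigma> \<in> {0..t}" for \<sigma>
      using e1 tI that by auto
    have cs: "continuous_on {0..R} (\<lambda>s. u (s *\<^sub>R e) \<sigma>)" if "\<sigma> \<in> {0..t}" for \<sigma>
    proof -
      have "continuous_on {0..R} (\<lambda>s. (s *\<^sub>R e, \<sigma>))" by (intro continuous_intros)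
      from continuous_on_compose[OF this continuous_on_subset[OF cu img2[OF that]]]
      show ?thesis by (simp add: o_def)
    qed
    show "(\<lambda>s. s ^ (N - 1) * u (s *\<^sub>R e) t) integrable_on {0..R}"
      using cs[of t] t by (intro integrable_continuous_real continuous_intros) auto
    show "(\<lambda>s. s ^ (N - 1) * u (s *\<^sub>R e) 0) integrable_on {0..R}"
      using cs[of 0] t by (intro integrable_continuous_real continuous_intros) auto
  qed
  ultimately show ?thesis using Z unfolding N_def by simp
qed




theorem lemma2p5:
  fixes R chi \<mu> :: real and Tmax :: ereal
    and u0 :: "real^'n \<Rightarrow> real" and u v :: "real^'n \<Rightarrow> real \<Rightarrow> real"
  assumes "R > 0" and "chi > 0"
    and "Ck 3 u0 (cball 0 R)"
    and "\<forall>x y. norm x \<le> R \<and> norm y \<le> R \<and> norm x = norm y \<longrightarrow> u0 x = u0 y"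
    and "\<forall>x. norm x \<le> R \<longrightarrow> u0 x > 0"
    and "\<forall>x. norm x = R \<longrightarrow> sgrad u0 (cball 0 R) x \<bullet> (inverse R *\<^sub>R x) = 0"
    and "\<mu> = integral (ball 0 R) u0 / measure lebesgue (ball (0::real^'n) R)"
    and "Tmax > 0"
    and "classical_solution R chi \<mu> u0 Tmax u v"
  shows "\<forall>t r. 0 < t \<and> ereal t < Tmax \<and> 0 < r \<and> r < R \<longrightarrow>
          (\<forall>e::real^'n. norm e = 1 \<longrightarrow>
            (let n = real CARD('n);
                 \<phi> = (\<lambda>s. v (s *\<^sub>R e) t);
                 M = (SUP x\<in>{x::real^'n. 0 < norm x \<and> norm x < R}. \<bar>u x t\<bar>)
             in - (\<mu> * R ^ CARD('n) / n) * r powr (1 - n) \<le> deriv \<phi> r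
              \<and> deriv \<phi> r \<le> \<mu> / n * r
              \<and> \<bar>deriv \<phi> r\<bar> \<le> M / n * r
              \<and> \<bar>deriv (deriv \<phi>) r\<bar> \<le> M))"
proof (intro allI impI)
  fix t r :: real and e :: "real^'n"
  assume tr: "0 < t \<and> ereal t < Tmax \<and> 0 < r \<and> r < R" and e1: "norm e = 1"
  define S where "S = cball (0::real^'n) R"
  define I where "I = {t::real. 0 \<le> t \<and> ereal t < Tmax}"
  define A where "A = (\<lambda>t y. (u y t / sqrt ((u y t)^2 + (norm (sgrad (\<lambda>z. u z t) S y))^2)) *\<^sub>R sgrad (\<lambda>z. u z t) S y)"
  define B where "B = (\<lambda>t y. (u y t / sqrt (1 + (norm (sgrad (\<lambda>z. v z t) S y))^2)) *\<^sub>R sgrad (\<lambda>z. v z t) S y)"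
  have cs: "C21 u S I \<and> C20 v S I
      \<and> (\<forall>x\<in>S. \<forall>t\<in>I. u x t > 0 \<and> v x t > 0)
      \<and> radial_on u R I \<and> radial_on v R I
      \<and> (\<forall>x. norm x < R \<longrightarrow> (\<forall>t. 0 < t \<and> ereal t < Tmax \<longrightarrow>
            tder u I x t = sdiv (A t) S x - chi * sdiv (B t) S x
          \<and> 0 = slap (\<lambda>z. v z t) S x - \<mu> + u x t))
      \<and> (\<forall>x. norm x = R \<longrightarrow> (\<forall>t. 0 < t \<and> ereal t < Tmax \<longrightarrow>
            (A t x - chi *\<^sub>R B t x) \<bullet> (inverse R *\<^sub>R x) = 0))
      \<and> (\<forall>x\<in>S. u x 0 = u0 x)"
    using assms(9) unfolding classical_solution_def Let_def S_def I_def A_def B_def by assumption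
  define n where "n = real CARD('n)"
  define \<phi> where "\<phi> = (\<lambda>s. v (s *\<^sub>R e) t)"
  define M where "M = (SUP x\<in>{x::real^'n. 0 < norm x \<and> norm x < R}. \<bar>u x t\<bar>)"
  have goal: "- (\<mu> * R ^ CARD('n) / n) * r powr (1 - n) \<le> deriv \<phi> r
              \<and> deriv \<phi> r \<le> \<mu> / n * r
              \<and> \<bar>deriv \<phi> r\<bar> \<le> M / n * r
              \<and> \<bar>deriv (deriv \<phi>) r\<bar> \<le> M"
  proof -
  define N where "N = CARD('n)"
  have N1: "1 \<le> N" unfolding N_def by (simp add: Suc_leI)
  have nN: "n = real N" unfolding n_def N_def ..
  have Rpos: "R > 0" using assms(1) .
  have t0: "0 < t" "ereal t < Tmax" "0 < r" "r < R" using tr by auto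
  have C21u: "C21 u S I" and C20v: "C20 v S I" using cs by auto
  have pos: "\<forall>x\<in>S. \<forall>t\<in>I. u x t > 0 \<and> v x t > 0" using cs by blast
  have radu: "radial_on u R I" and radv: "radial_on v R I" using cs by auto
  have pde: "\<forall>x. norm x < R \<longrightarrow> (\<forall>t. 0 < t \<and> ereal t < Tmax \<longrightarrow>
            tder u I x t = sdiv (A t) S x - chi * sdiv (B t) S x
          \<and> 0 = slap (\<lambda>z. v z t) S x - \<mu> + u x t)" using cs by blast
  have bcs: "\<forall>x. norm x = R \<longrightarrow> (\<forall>t. 0 < t \<and> ereal t < Tmax \<longrightarrow>
            (A t x - chi *\<^sub>R B t x) \<bullet> (inverse R *\<^sub>R x) = 0)" using cs by blast
  have init: "\<forall>x\<in>S. u x 0 = u0 x" using cs by blast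
  have C20u: "C20 u S I" using C21u unfolding C21_def by blast
  have tI: "{0..t} \<subseteq> I"
  proof
    fix x assume "x \<in> {0..t}"
    then have "ereal x \<le> ereal t" "0 \<le> x" by auto
    then have "ereal x < Tmax" using t0(2) by (metis le_less_trans)
    then show "x \<in> I" unfolding I_def using \<open>0 \<le> x\<close> by simp
  qed
  have t_I: "t \<in> I" "0 \<in> I" using tI t0 by auto
  have RPu: "radprof (\<lambda>x. u x \<tau>) R e" if "\<tau> \<in> I" for \<tau>
  proof
    show "0 < R" by (rule Rpos)
    show "Ck 2 (\<lambda>x. u x \<tau>) (cball 0 R)" using C20u that unfolding C20_def S_def by blast
    show "\<forall>x y. norm x \<le> R \<and> norm y \<le> R \<and> norm x = norm y \<longrightarrow> u x \<tau> = u y \<tau>"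
      using radu that unfolding radial_on_def by blast
    show "norm e = 1" by (rule e1)
  qed
  have RPv: "radprof (\<lambda>x. v x \<tau>) R e" if "\<tau> \<in> I" for \<tau>
  proof
    show "0 < R" by (rule Rpos)
    show "Ck 2 (\<lambda>x. v x \<tau>) (cball 0 R)" using C20v that unfolding C20_def S_def by blast
    show "\<forall>x y. norm x \<le> R \<and> norm y \<le> R \<and> norm x = norm y \<longrightarrow> v x \<tau> = v y \<tau>"
      using radv that unfolding radial_on_def by blast
    show "norm e = 1" by (rule e1)
  qed
  have flux: "\<forall>\<tau>. 0 < \<tau> \<and> \<tau> \<le> t \<longrightarrow> ((\<lambda>s. s ^ (CARD('n) - 1) * tder u I (s *\<^sub>R e) \<tau>) has_integral 0) {0..R}"
  proof (intro allI impI)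
    fix \<tau> assume \<tau>: "0 < \<tau> \<and> \<tau> \<le> t"
    then have \<tau>I: "\<tau> \<in> I" using tI by auto
    then have \<tau>T: "0 < \<tau> \<and> ereal \<tau> < Tmax" using \<tau> unfolding I_def by auto
    show "((\<lambda>s. s ^ (CARD('n) - 1) * tder u I (s *\<^sub>R e) \<tau>) has_integral 0) {0..R}"
    proof (rule flux_zero[OF RPu[OF \<tau>I] RPv[OF \<tau>I]])
      show "\<forall>x\<in>cball 0 R. 0 < u x \<tau>" using pos \<tau>I unfolding S_def by blast
      show "A \<tau> = (\<lambda>y. (u y \<tau> / sqrt ((u y \<tau>)\<^sup>2 + (norm (sgrad (\<lambda>x. u x \<tau>) (cball 0 R) y))\<^sup>2)) *\<^sub>R sgrad (\<lambda>x. u x \<tau>) (cball 0 R) y)"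
        unfolding A_def S_def ..
      show "B \<tau> = (\<lambda>y. (u y \<tau> / sqrt (1 + (norm (sgrad (\<lambda>x. v x \<tau>) (cball 0 R) y))\<^sup>2)) *\<^sub>R sgrad (\<lambda>x. v x \<tau>) (cball 0 R) y)"
        unfolding B_def S_def ..
      show "\<forall>s. 0 < s \<and> s < R \<longrightarrow> tder u I (s *\<^sub>R e) \<tau> = sdiv (A \<tau>) (cball 0 R) (s *\<^sub>R e) - chi * sdiv (B \<tau>) (cball 0 R) (s *\<^sub>R e)"
        using pde \<tau>T e1 unfolding S_def by auto
      show "(A \<tau> (R *\<^sub>R e) - chi *\<^sub>R B \<tau> (R *\<^sub>R e)) \<bullet> (inverse R *\<^sub>R (R *\<^sub>R e)) = 0"
      proof -
        have "norm (R *\<^sub>R e) = R" using e1 Rpos by simp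
        then show ?thesis using bcs[rule_format, of "R *\<^sub>R e" \<tau>] \<tau>T by blast
      qed
    qed
  qed
  have massc: "integral {0..R} (\<lambda>s. s ^ (CARD('n) - 1) * u (s *\<^sub>R e) t) = integral {0..R} (\<lambda>s. s ^ (CARD('n) - 1) * u (s *\<^sub>R e) 0)"
  proof (rule mass_cons[OF _ _ tI e1 _ _ _ flux])
    show "0 \<le> R" "0 \<le> t" using Rpos t0 by auto
    show "\<forall>x\<in>cball 0 R. \<forall>\<tau>\<in>I. (\<lambda>s. u x s) differentiable at \<tau> within I"
      using C21u unfolding C21_def S_def by blast
    show "continuous_on (cball 0 R \<times> I) (\<lambda>(x, \<tau>). u x \<tau>)"
      using C20u unfolding C20_def S_def by blast
    show "continuous_on (cball 0 R \<times> I) (\<lambda>(x, \<tau>). tder u I x \<tau>)"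
      using C21u unfolding C21_def S_def by blast
  qed
  have u0c: "continuous_on (cball 0 R) u0"
    using assms(3) unfolding eval_nat_numeral(3) Ck.simps(2) by blast
  have pol: "integral (ball 0 R) u0 = real CARD('n) * unit_ball_vol (real CARD('n)) *
      integral {0..R} (\<lambda>s. s ^ (CARD('n) - 1) * prof (\<lambda>x. u x 0) e s)"
  proof (rule polar[OF _ u0c])
    show "0 \<le> R" using Rpos by simp
    show "continuous_on {0..R} (prof (\<lambda>x. u x 0) e)" using radprof.prof_cont[OF RPu[OF t_I(2)]] .
    show "\<forall>y. norm y \<le> R \<longrightarrow> u0 y = prof (\<lambda>x. u x 0) e (norm y)"
      using radprof.w_prof[OF RPu[OF t_I(2)]] init unfolding S_def by auto
  qed
  define mt where "mt = integral {0..R} (\<lambda>s. s ^ (N - 1) * u (s *\<^sub>R e) t)"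
  have mt: "mt = \<mu> * R ^ N / real N"
  proof -
    define \<omega> where "\<omega> = unit_ball_vol (real CARD('n))"
    have om: "\<omega> > 0" unfolding \<omega>_def by simp
    have RN: "R ^ N > 0" using Rpos by simp
    have N0: "real N > 0" using N1 by simp
    have "\<mu> = real N * \<omega> * mt / (\<omega> * R ^ N)"
      unfolding assms(7) pol meas_ball[OF less_imp_le[OF Rpos]] mt_def \<omega>_def N_def
      using massc by (simp add: prof_def)
    then show ?thesis using om RN N0 Rpos by (simp add: field_simps)
  qed
  define gu where "gu = (\<lambda>s. u (s *\<^sub>R e) t)"
  define Gv where "Gv = gprof (\<lambda>x. v x t) R e"
  have veq: "\<forall>s. 0 < s \<and> s < R \<longrightarrow> 0 = slap (\<lambda>x. v x t) (cball 0 R) (s *\<^sub>R e) - \<mu> + gu s"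
    using pde t0 e1 unfolding S_def gu_def by auto
  note vo = v_ode[OF RPv[OF t_I(1)] veq]
  have dG: "deriv Gv r = \<mu> - gu r - (real N - 1) * Gv r / r"
    using vo(1) t0 unfolding Gv_def N_def by blast
  have Jr: "((\<lambda>s. s ^ (N - 1) * (\<mu> - gu s)) has_integral r ^ (N - 1) * Gv r) {0..r}"
    using vo(2) t0 unfolding Gv_def N_def by blast
  have guc: "continuous_on {0..R} gu"
    using radprof.prof_cont[OF RPu[OF t_I(1)]] unfolding gu_def prof_def .
  have gupos: "gu s > 0" if "0 \<le> s" "s \<le> R" for s
    using pos t_I(1) that e1 unfolding gu_def S_def by auto
  have bdd: "bdd_above ((\<lambda>x. \<bar>u x t\<bar>) ` {x::real^'n. 0 < norm x \<and> norm x < R})"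
  proof -
    have "continuous_on S (\<lambda>x. \<bar>u x t\<bar>)"
      using radprof.C2c[OF RPu[OF t_I(1)]] unfolding S_def by (intro continuous_intros)
    then have "compact ((\<lambda>x. \<bar>u x t\<bar>) ` S)" unfolding S_def by (intro compact_continuous_image) auto
    then have "bdd_above ((\<lambda>x. \<bar>u x t\<bar>) ` S)" by (intro bounded_imp_bdd_above compact_imp_bounded)
    moreover have "(\<lambda>x. \<bar>u x t\<bar>) ` {x::real^'n. 0 < norm x \<and> norm x < R} \<subseteq> (\<lambda>x. \<bar>u x t\<bar>) ` S"
      unfolding S_def by auto
    ultimately show ?thesis by (rule bdd_above_mono)
  qed
  have guM: "gu s \<le> M" if "0 \<le> s" "s \<le> R" for s
  proof (rule le_closure_Icc[OF Rpos guc])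
    show "\<forall>s. 0 < s \<and> s < R \<longrightarrow> gu s \<le> M"
    proof (intro allI impI)
      fix s assume s: "0 < s \<and> s < R"
      have "\<bar>u (s *\<^sub>R e) t\<bar> \<le> M" unfolding M_def
        by (rule cSUP_upper[OF _ bdd]) (use s e1 in auto)
      then show "gu s \<le> M" unfolding gu_def by simp
    qed
    show "s \<in> {0..R}" using that by simp
  qed
  define P where "P = (\<lambda>a. integral {0..a} (\<lambda>s. s ^ (N - 1) * gu s))"
  have intg: "(\<lambda>s. s ^ (N - 1) * gu s) integrable_on {0..a}" if "a \<le> R" for a
    using continuous_on_subset[OF guc, of "{0..a}"] that
    by (intro integrable_continuous_real continuous_intros) auto
  have rR: "r \<le> R" "0 \<le> r" using t0 by auto
  have ip: "((\<lambda>s. s ^ (N - 1)) has_integral r ^ N / real N) {0..r}" by (rule int_pow[OF rR(2) N1])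
  have Pval: "r ^ (N - 1) * Gv r = \<mu> * (r ^ N / real N) - P r"
  proof -
    have "((\<lambda>s. \<mu> * s ^ (N - 1) - s ^ (N - 1) * gu s) has_integral (\<mu> * (r ^ N / real N) - P r)) {0..r}"
      unfolding P_def by (intro has_integral_diff has_integral_mult_right ip integrable_integral intg rR)
    moreover have "(\<lambda>s. \<mu> * s ^ (N - 1) - s ^ (N - 1) * gu s) = (\<lambda>s. s ^ (N - 1) * (\<mu> - gu s))"
      by (auto simp: algebra_simps)
    ultimately show ?thesis using Jr has_integral_unique by metis
  qed
  have gunn: "0 \<le> s ^ (N - 1) * gu s" if "0 \<le> s" "s \<le> R" for s
    using gupos[OF that] that by simp
  have P0: "0 \<le> P a" if "0 \<le> a" "a \<le> R" for a
    unfolding P_def using intg[OF that(2)] gunn that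
    by (intro integral_nonneg) auto
  have PR: "P R = mt" unfolding P_def mt_def gu_def ..
  have Pmono: "P r \<le> P R"
    unfolding P_def using intg rR gunn
    by (intro integral_subset_le) auto
  have PM: "P a \<le> M * (a ^ N / real N)" if "0 \<le> a" "a \<le> R" for a
  proof -
    have "P a \<le> integral {0..a} (\<lambda>s. M * s ^ (N - 1))"
      unfolding P_def
    proof (rule integral_le[OF intg[OF that(2)]])
      show "(\<lambda>s. M * s ^ (N - 1)) integrable_on {0..a}"
        by (intro integrable_continuous_real continuous_intros)
      fix s assume "s \<in> {0..a}"
      then show "s ^ (N - 1) * gu s \<le> M * s ^ (N - 1)"
        using guM[of s] that by (auto simp: mult.commute intro!: mult_right_mono)
    qed
    also have "\<dots> = M * (a ^ N / real N)"
      using integral_unique[OF int_pow[OF that(1) N1]] by simp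
    finally show ?thesis .
  qed
  have N0: "real N > 0" using N1 by simp
  have mu0: "0 \<le> \<mu>"
  proof -
    have "0 \<le> mt" using P0[of R] PR Rpos by simp
    moreover have "R ^ N > 0" using Rpos by simp
    ultimately show ?thesis using mt N0 by (simp add: zero_le_divide_iff zero_le_mult_iff)
  qed
  have muM: "\<mu> \<le> M"
  proof -
    have "\<mu> * (R ^ N / real N) \<le> M * (R ^ N / real N)" using PM[of R] PR mt Rpos by simp
    moreover have "R ^ N / real N > 0" using Rpos N0 by simp
    ultimately show ?thesis by (rule mult_right_le_imp_le)
  qed
  have phi: "\<phi> = prof (\<lambda>x. v x t) e" unfolding \<phi>_def prof_def ..
  have pd: "(\<phi> has_real_derivative Gv s) (at s)" if "0 \<le> s" "s < R" for s
    unfolding phi Gv_def using radprof.prof_deriv[OF RPv[OF t_I(1)] that] .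
  have d1: "deriv \<phi> r = Gv r" using pd[OF rR(2) t0(4)] by (rule DERIV_imp_deriv)
  have d2: "deriv (deriv \<phi>) r = deriv Gv r"
  proof -
    have G': "(Gv has_real_derivative deriv Gv r) (at r)"
      using radprof.gprof_diff[OF RPv[OF t_I(1)] rR(2) t0(4)] unfolding Gv_def
      by (simp add: DERIV_deriv_iff_real_differentiable)
    have "(deriv \<phi> has_real_derivative deriv Gv r) (at r)"
    proof (rule has_field_derivative_transform_within_open[OF G', where S="{0<..<R}"])
      show "open {0<..<R}" by simp
      show "r \<in> {0<..<R}" using t0 by simp
      fix s assume "s \<in> {0<..<R}"
      then show "Gv s = deriv \<phi> s" using pd[of s] by (auto intro: DERIV_imp_deriv[symmetric])
    qed
    then show ?thesis by (rule DERIV_imp_deriv)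
  qed
  define p where "p = r ^ (N - 1)"
  have pp: "p > 0" unfolding p_def using t0 by simp
  have rN: "r ^ N = p * r" unfolding p_def using power_minus_mult[of N r] N1 by (simp add: mult.commute)
  define a where "a = \<mu> / real N"
  define b where "b = M / real N"
  define k where "k = real N - 1"
  define z where "z = P r / (p * r)"
  have k0: "0 \<le> k" unfolding k_def using N1 by simp
  have Nk: "real N = k + 1" unfolding k_def by simp
  have a0: "0 \<le> a" unfolding a_def using mu0 N0 by simp
  have ab: "a \<le> b" unfolding a_def b_def using muM N0 by (simp add: divide_right_mono)
  have Mb: "M = b + k * b"
  proof -
    have "b + k * b = real N * b" using Nk by (simp add: algebra_simps)
    also have "\<dots> = M" unfolding b_def using N0 by simp
    finally show ?thesis by simp
  qed
  have z0: "0 \<le> z" unfolding z_def using P0[OF rR(2,1)] pp t0 by simp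
  have zb: "z \<le> b"
  proof -
    have "P r \<le> M * (p * r / real N)" using PM[OF rR(2,1)] rN by simp
    then show ?thesis unfolding z_def b_def using pp t0 N0 by (simp add: field_simps)
  qed
  have GvE: "Gv r = r * (a - z)"
  proof -
    have "p * Gv r = \<mu> * (p * r / real N) - P r" using Pval rN unfolding p_def by simp
    then have e: "Gv r = (\<mu> * (p * r / real N) - P r) / p" using pp by (simp add: eq_divide_eq mult.commute)
    have "r * (a - z) = (\<mu> * (p * r / real N) - P r) / p"
      unfolding a_def z_def using pp t0 N0 by (simp add: field_simps)
    then show ?thesis using e by simp
  qed
  have dGE: "deriv Gv r = a - gu r + k * z"
  proof -
    have "deriv Gv r = \<mu> - gu r - k * (a - z)" unfolding dG GvE k_def using t0 by simp
    also have "\<mu> = (k + 1) * a" unfolding a_def Nk[symmetric] using N0 by simp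
    finally show ?thesis by (simp add: algebra_simps)
  qed
  have kz: "k * z \<le> k * b" using zb k0 by (rule mult_left_mono)
  have kz0: "0 \<le> k * z" using k0 z0 by simp
  have gur: "0 < gu r" "gu r \<le> M" using gupos[OF rR(2,1)] guM[OF rR(2,1)] by auto
  have c1: "- (\<mu> * R ^ CARD('n) / n) * r powr (1 - n) \<le> deriv \<phi> r"
  proof -
    have "1 - n = - real (N - 1)" unfolding nN using N1 by (simp add: of_nat_diff)
    then have pw: "r powr (1 - n) = 1 / p" unfolding p_def using t0
      by (simp add: powr_minus powr_realpow divide_inverse)
    have "P r / p \<le> mt / p" using Pmono PR pp by (simp add: divide_right_mono)
    moreover have "Gv r = \<mu> * r / real N - P r / p"
    proof -
      have "r * (a - z) = \<mu> * r / real N - P r / p" unfolding a_def z_def using pp t0 by (simp add: field_simps)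
      then show ?thesis using GvE by simp
    qed
    moreover have "0 \<le> \<mu> * r / real N" using mu0 t0 N0 by simp
    ultimately have "- (mt / p) \<le> Gv r" by linarith
    moreover have "- (\<mu> * R ^ CARD('n) / n) * r powr (1 - n) = - (mt / p)"
      unfolding pw unfolding mt nN N_def by simp
    ultimately show ?thesis unfolding d1 by simp
  qed
  have c2: "deriv \<phi> r \<le> \<mu> / n * r"
  proof -
    have "r * (a - z) \<le> r * a" using z0 t0 by (simp add: mult_left_mono)
    then show ?thesis unfolding d1 GvE a_def nN by (simp add: mult.commute)
  qed
  have c3: "\<bar>deriv \<phi> r\<bar> \<le> M / n * r"
  proof -
    have "\<bar>a - z\<bar> \<le> b" using a0 ab z0 zb by linarith
    then have "r * \<bar>a - z\<bar> \<le> r * b" using t0 by (simp add: mult_left_mono)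
    then show ?thesis unfolding d1 GvE b_def nN using t0 by (simp add: abs_mult mult.commute)
  qed
  have c4: "\<bar>deriv (deriv \<phi>) r\<bar> \<le> M"
    unfolding d2 dGE using gur kz kz0 a0 ab Mb by linarith
  show ?thesis using c1 c2 c3 c4 by blast
  qed
  then show "let n = real CARD('n);
                 \<phi> = (\<lambda>s. v (s *\<^sub>R e) t);
                 M = (SUP x\<in>{x::real^'n. 0 < norm x \<and> norm x < R}. \<bar>u x t\<bar>)
             in - (\<mu> * R ^ CARD('n) / n) * r powr (1 - n) \<le> deriv \<phi> r
              \<and> deriv \<phi> r \<le> \<mu> / n * r
              \<and> \<bar>deriv \<phi> r\<bar> \<le> M / n * r
              \<and> \<bar>deriv (deriv \<phi>) r\<bar> \<le> M"
    unfolding Let_def n_def \<phi>_def M_def .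
qed

end
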